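(* Let $\hat{\bm h}_k\in\hat{\mathcal H}_k$ be a fixed predictor (chosen independently of the samples), let $\alpha\in[0,1]$ and $\delta\in(0,1)$. Then, with probability at least $1-\delta$ over the draw of the samples $\hat{\mathcal D}_k$ and $\hat{\mathcal D}_{\text{proxy}}$, \[ \mathcal{L}_{\mathcal{D}_{\text{test}}}(\hat{\bm h}_k,\hat{\bm h}^* )\le \mathcal{L}_{\hat{\mathcal D}_k\cup\hat{\mathcal D}_{\text{proxy}}}(\hat{\bm h}_k)+\sqrt{\Big(\tfrac{2\alpha^2}{m_k}+\tfrac{2(1-\alpha)^2}{m_{\text{proxy}}}\Big)\log\tfrac{2}{\delta}}+\alpha\big[\lambda_k+d_{\mathcal G_k}(\mathcal D_k,\mathcal D_{\text{test}})\big] \] \[ +(1-\alpha)\Big[\lambda_{k,\text{proxy}}+d_{\mathcal G_k}(\mathcal D_{\text{proxy}},\mathcal D_{\text{test}})+p^{(1)}_{\text{proxy}}\,\mathcal L_{\mathcal D^{(1)}_{\text{proxy}}}(\hat{\bm h}^*,\bm h^*_{\text{proxy}})+p^{(2)}_{\text{proxy}}\,\mathcal L_{\mathcal D^{(2)}_{\text{proxy}}}(\hat{\bm h}^*_{\text{proxy}},\bm h^*_{\text{proxy}})\Big], \] where $p^{(1)}_{\text{proxy}}=\Pr_{\mathbf x\sim\mathcal D_{\text{proxy}}}[\hat{\bm h}^*(\mathbf x)\neq\hat{\bm h}^*_{\text{proxy}}(\mathbf x)]$, $p^{(2)}_{\text{proxy}}=\Pr_{\mathbf x\sim\mathcal D_{\text{proxy}}}[\hat{\bm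 h}^*(\mathbf x)=\hat{\bm h}^*_{\text{proxy}}(\mathbf x)]$ (so $p^{(1)}_{\text{proxy}}+p^{(2)}_{\text{proxy}}=1$), and $\mathcal D^{(1)}_{\text{proxy}}$, $\mathcal D^{(2)}_{\text{proxy}}$ are the distribution $\mathcal D_{\text{proxy}}$ conditioned on the events $\{\hat{\bm h}^*(\mathbf x)\neq\hat{\bm h}^*_{\text{proxy}}(\mathbf x)\}$ and $\{\hat{\bm h}^*(\mathbf x)=\hat{\bm h}^*_{\text{proxy}}(\mathbf x)\}$ respectively (a term is taken to be $0$ when its probability is $0$).
   Context: Let $\mathcal X$ be a (measurable) input space and $C\ge 2$ the number of classes. $\Delta^{C-1}\subset\mathbb R^C$ is the probability simplex and $V(\Delta^{C-1})$ its vertex set, i.e. the $C$ one-hot vectors. The ground-truth labeling function is $\hat{\bm h}^*:\mathcal X\to V(\Delta^{C-1})$. For a distribution $\mathcal D$ on $\mathcal X$ and functions $\bm h,\bm h':\mathcal X\to\Delta^{C-1}$, $\mathcal L_{\mathcal D}(\bm h,\bm h'):=\mathbb E_{\mathbf x\sim\mathcal D}\|\bm h(\mathbf x)-\bm h'(\mathbf x)\|_1$; for a finite sample $\hat{\mathcal D}$ this expectation is the empirical average over the sample. Client $k$ has a private distribution $\mathcal D_k$ on $\mathcal X$ and an i.i.d. sample $\hat{\mathcal D}_k$ of size $m_k$ from it; there is a proxy distribution $\mathcal D_{\text{proxy}}$ on $\mathcal X$ with an i.i.d. sample $\hat{\mathcal D}_{\text{proxy}}$ of size $m_{\text{proxy}}$,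 independent of $\hat{\mathcal D}_k$; $\mathcal D_{\text{test}}$ is a test distribution on $\mathcal X$. $\bm h^*_{\text{proxy}}:\mathcal X\to\Delta^{C-1}$ is a fixed (arbitrary) labeling function for proxy samples and $\hat{\bm h}^*_{\text{proxy}}:\mathcal X\to V(\Delta^{C-1})$ is its one-hot output (the vertex at its largest coordinate, ties broken by a fixed rule). $\hat{\mathcal H}_k$ is a class of functions $\mathcal X\to V(\Delta^{C-1})$ containing $\hat{\bm h}_k$. The training loss is $\mathcal L_{\hat{\mathcal D}_k\cup\hat{\mathcal D}_{\text{proxy}}}(\hat{\bm h}_k):=\alpha\,\mathcal L_{\hat{\mathcal D}_k}(\hat{\bm h}_k,\hat{\bm h}^* )+(1-\alpha)\,\mathcal L_{\hat{\mathcal D}_{\text{proxy}}}(\hat{\bm h}_k,\bm h^*_{\text{proxy}})$. Minimum combined losses: $\lambda_k=\inf_{\hat{\bm h}\in\hat{\mathcal H}_k}\{\mathcal L_{\mathcal D_{\text{test}}}(\hat{\bm h},\hat{\bm h}^* )+\mathcal L_{\mathcal D_k}(\hat{\bm h},\hat{\bm h}^* )\}$ and $\lambda_{k,\text{proxy}}=\inf_{\hat{\bm h}\in\hat{\mathcal H}_k}\{\mathcal L_{\mathcal D_{\text{test}}}(\hat{\bm h},\hat{\bm h}^* )+\mathcal L_{\mathcal D_{\text{proxy}}}(\hat{\bm h},\hat{\bm h}^* )\}$. $\mathcal G_k$ is the set of functions $g:\mathcal X\to\{0,1\}$ of the form $g(\mathbf x)=\tfrac12\|\hat{\bm h}(\mathbf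 x)-\hat{\bm h}'(\mathbf x)\|_1$ with $\hat{\bm h},\hat{\bm h}'\in\hat{\mathcal H}_k$. For distributions $\mathcal D,\mathcal D'$ on $\mathcal X$, the $\mathcal G_k$-distance is $d_{\mathcal G_k}(\mathcal D,\mathcal D')=2\sup_{g\in\mathcal G_k}\big|\Pr_{\mathcal D}[g(\mathbf x)=1]-\Pr_{\mathcal D'}[g(\mathbf x)=1]\big|$. *)

theory Defs
  imports "HOL-Probability.Probability"
begin

definition onehot :: "'c \<Rightarrow> 'c \<Rightarrow> real" where
  "onehot j = (\<lambda>i. if i = j then 1 else 0)"

definition prob_simplex :: "('c::finite \<Rightarrow> real) set" where
  "prob_simplex = {p. (\<forall>i. 0 \<le> p i) \<and> sum p UNIV = 1}"

definition simplex_vertices :: "('c::finite \<Rightarrow> real) set" where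
  "simplex_vertices = range onehot"

definition l1dist :: "('c::finite \<Rightarrow> real) \<Rightarrow> ('c \<Rightarrow> real) \<Rightarrow> real" where
  "l1dist p q = (\<Sum>i\<in>UNIV. \<bar>p i - q i\<bar>)"

definition pop_loss :: "'a measure \<Rightarrow> ('a \<Rightarrow> 'c::finite \<Rightarrow> real) \<Rightarrow> ('a \<Rightarrow> 'c \<Rightarrow> real) \<Rightarrow> real" where
  "pop_loss D h h' = (\<integral>x. l1dist (h x) (h' x) \<partial>D)"

definition emp_loss :: "nat \<Rightarrow> (nat \<Rightarrow> 'a) \<Rightarrow> ('a \<Rightarrow> 'c::finite \<Rightarrow> real) \<Rightarrow> ('a \<Rightarrow> 'c \<Rightarrow> real) \<Rightarrow> real" where
  "emp_loss m S h h' = (\<Sum>i<m. l1dist (h (S i)) (h' (S i))) / real m"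

definition train_loss :: "real \<Rightarrow> nat \<Rightarrow> (nat \<Rightarrow> 'a) \<Rightarrow> nat \<Rightarrow> (nat \<Rightarrow> 'a)
    \<Rightarrow> ('a \<Rightarrow> 'c::finite \<Rightarrow> real) \<Rightarrow> ('a \<Rightarrow> 'c \<Rightarrow> real) \<Rightarrow> ('a \<Rightarrow> 'c \<Rightarrow> real) \<Rightarrow> real" where
  "train_loss \<alpha> mk S mp T h hstar hproxy =
     \<alpha> * emp_loss mk S h hstar + (1 - \<alpha>) * emp_loss mp T h hproxy"

definition min_comb_loss :: "'a measure \<Rightarrow> 'a measure \<Rightarrow> ('a \<Rightarrow> 'c::finite \<Rightarrow> real) set
    \<Rightarrow> ('a \<Rightarrow> 'c \<Rightarrow> real) \<Rightarrow> real" where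
  "min_comb_loss Dtest D H hstar = (INF h\<in>H. pop_loss Dtest h hstar + pop_loss D h hstar)"

definition G_class :: "('a \<Rightarrow> 'c::finite \<Rightarrow> real) set \<Rightarrow> ('a \<Rightarrow> real) set" where
  "G_class H = {(\<lambda>x. (1/2) * l1dist (h x) (h' x)) | h h'. h \<in> H \<and> h' \<in> H}"

definition G_dist :: "('a \<Rightarrow> real) set \<Rightarrow> 'a measure \<Rightarrow> 'a measure \<Rightarrow> real" where
  "G_dist G D D' = 2 * (SUP g\<in>G. \<bar>measure D {x \<in> space D. g x = 1} - measure D' {x \<in> space D'. g x = 1}\<bar>)"

text \<open>p * L_{D|A}(f,g), where D|A is D conditioned on event A (uniform_measure D A);
  taken to be 0 when Pr_D[A] = 0.\<close>
definition cond_term :: "'a measure \<Rightarrow> 'a set \<Rightarrow> ('a \<Rightarrow> 'c::finite \<Rightarrow> real) \<Rightarrow> ('a \<Rightarrow> 'c \<Rightarrow> real) \<Rightarrow> real" where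
  "cond_term D A f g = (if measure D A = 0 then 0 else measure D A * pop_loss (uniform_measure D A) f g)"

definition vec_measurable :: "'a measure \<Rightarrow> ('a \<Rightarrow> 'c \<Rightarrow> real) \<Rightarrow> bool" where
  "vec_measurable M h = (\<forall>i. (\<lambda>x. h x i) \<in> borel_measurable M)"

end

theory Submission
  imports Defs
begin

lemma l1dist_sym: "l1dist p q = l1dist q p"
  unfolding l1dist_def by (simp add: abs_minus_commute)

lemma l1dist_tri: "l1dist p r \<le> l1dist p q + l1dist q r"
  unfolding l1dist_def by (simp add: sum.distrib[symmetric] sum_mono abs_triangle_ineq4 abs_diff_triangle_ineq[of "p _" "q _"])

lemma l1dist_nonneg: "0 \<le> l1dist p q"
  unfolding l1dist_def by (simp add: sum_nonneg)

lemma onehot_l1: "l1dist (onehot i :: 'c::finite \<Rightarrow> real) (onehot j) = (if i = j then 0 else 2)"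
proof (cases "i = j")
  case True thus ?thesis by (simp add: l1dist_def)
next
  case False
  have "l1dist (onehot i :: 'c::finite \<Rightarrow> real) (onehot j) = (\<Sum>c\<in>UNIV. (if c = i then 1 else 0) + (if c = j then 1 else 0))"
    unfolding l1dist_def onehot_def using False by (intro sum.cong) auto
  also have "\<dots> = 2" by (simp add: sum.distrib)
  finally show ?thesis using False by simp
qed

lemma vert_simplex: "simplex_vertices \<subseteq> (prob_simplex :: ('c::finite \<Rightarrow> real) set)"
  unfolding simplex_vertices_def prob_simplex_def onehot_def by auto

lemma simplex_l1_le: assumes "p \<in> prob_simplex" "q \<in> prob_simplex" shows "l1dist p q \<le> 2"
proof -
  have nn: "0 \<le> p i" "0 \<le> q i" for i using assms unfolding prob_simplex_def by auto
  have "l1dist p q \<le> (\<Sum>i\<in>UNIV. p i + q i)"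
    unfolding l1dist_def using nn by (intro sum_mono) (simp add: abs_le_iff)
  also have "\<dots> = 2" using assms by (simp add: sum.distrib prob_simplex_def)
  finally show ?thesis .
qed

lemma l1_meas:
  assumes "vec_measurable M h" "vec_measurable M h'" "sets D = sets M"
  shows "(\<lambda>x. l1dist (h x) (h' x)) \<in> borel_measurable D"
proof -
  have "(\<lambda>x. l1dist (h x) (h' x)) \<in> borel_measurable M"
    using assms(1,2) unfolding l1dist_def vec_measurable_def
    by (intro borel_measurable_sum borel_measurable_abs borel_measurable_diff) auto
  thus ?thesis using measurable_cong_sets[OF assms(3) refl] by blast
qed

lemma l1_int:
  assumes "finite_measure D" "vec_measurable M h" "vec_measurable M h'" "sets D = sets M"
    "\<forall>x. h x \<in> prob_simplex" "\<forall>x. h' x \<in> prob_simplex"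
  shows "integrable D (\<lambda>x. l1dist (h x) (h' x))"
proof -
  interpret finite_measure D by fact
  show ?thesis
  proof (rule integrable_const_bound[where B=2])
    show "AE x in D. norm (l1dist (h x) (h' x)) \<le> 2"
      by (intro AE_I2) (metis real_norm_def abs_of_nonneg l1dist_nonneg simplex_l1_le assms(5,6))
  qed (rule l1_meas[OF assms(2,3,4)])
qed

lemma l1_eq0: "l1dist p q = 0 \<longleftrightarrow> p = q"
proof
  assume "l1dist p q = 0"
  hence "\<forall>i\<in>UNIV. \<bar>p i - q i\<bar> = 0" unfolding l1dist_def
    by (subst (asm) sum_nonneg_eq_0_iff) auto
  thus "p = q" by auto
qed (simp add: l1dist_def)

lemma loss_prob:
  assumes D: "prob_space D" "sets D = sets M" and hm: "vec_measurable M h" "vec_measurable M h'"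
    and hv: "\<forall>x. h x \<in> simplex_vertices" "\<forall>x. h' x \<in> simplex_vertices"
  shows "pop_loss D h h' = 2 * measure D {x\<in>space D. (1/2) * l1dist (h x) (h' x) = 1}"
proof -
  interpret prob_space D by fact
  note [measurable] = l1_meas[OF hm D(2)]
  define S where "S = {x\<in>space D. (1/2) * l1dist (h x) (h' x) = 1}"
  have S[measurable]: "S \<in> sets D" unfolding S_def by measurable
  have pt: "l1dist (h x) (h' x) = 2 * indicator S x" if "x \<in> space D" for x
  proof -
    obtain i j where "h x = onehot i" "h' x = onehot j" using hv unfolding simplex_vertices_def by blast
    thus ?thesis using that by (auto simp: S_def onehot_l1 indicator_def)
  qed
  have "pop_loss D h h' = (\<integral>x. 2 * indicator S x \<partial>D)"
    unfolding pop_loss_def by (intro Bochner_Integration.integral_cong) (auto simp: pt)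
  also have "\<dots> = 2 * measure D S" using S by simp
  finally show ?thesis unfolding S_def .
qed

lemma pop_tri:
  assumes D: "prob_space D" "sets D = sets M"
    and m: "vec_measurable M f" "vec_measurable M g" "vec_measurable M h"
    and s: "\<forall>x. f x \<in> prob_simplex" "\<forall>x. g x \<in> prob_simplex" "\<forall>x. h x \<in> prob_simplex"
  shows "pop_loss D f h \<le> pop_loss D f g + pop_loss D g h"
proof -
  interpret prob_space D by fact
  have fm: "finite_measure D" by unfold_locales
  have i1: "integrable D (\<lambda>x. l1dist (f x) (g x))" by (rule l1_int[OF fm m(1,2) D(2) s(1,2)])
  have i2: "integrable D (\<lambda>x. l1dist (g x) (h x))" by (rule l1_int[OF fm m(2,3) D(2) s(2,3)])
  have i3: "integrable D (\<lambda>x. l1dist (f x) (h x))" by (rule l1_int[OF fm m(1,3) D(2) s(1,3)])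
  have "pop_loss D f g + pop_loss D g h = (\<integral>x. l1dist (f x) (g x) + l1dist (g x) (h x) \<partial>D)"
    unfolding pop_loss_def by (rule Bochner_Integration.integral_add[symmetric, OF i1 i2])
  also have "pop_loss D f h \<le> \<dots>" unfolding pop_loss_def
    by (rule Bochner_Integration.integral_mono[OF i3 Bochner_Integration.integrable_add[OF i1 i2]]) (rule l1dist_tri)
  finally show ?thesis by simp
qed

lemma pop_sym: "pop_loss D f g = pop_loss D g f"
  unfolding pop_loss_def by (simp add: l1dist_sym)

lemma dom_shift:
  assumes D: "prob_space D" "sets D = sets M" and Dt: "prob_space Dt" "sets Dt = sets M"
    and H: "\<forall>h\<in>H. (\<forall>x. h x \<in> simplex_vertices) \<and> vec_measurable M h"
    and h: "h \<in> H" "h' \<in> H"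
  shows "pop_loss Dt h h' \<le> pop_loss D h h' + G_dist (G_class H) D Dt"
proof -
  define g where "g = (\<lambda>x. (1/2) * l1dist (h x) (h' x))"
  have gG: "g \<in> G_class H" unfolding g_def G_class_def using h by blast
  define F where "F = (\<lambda>q::'a\<Rightarrow>real. \<bar>measure D {x \<in> space D. q x = 1} - measure Dt {x \<in> space Dt. q x = 1}\<bar>)"
  have bdd: "bdd_above (F ` G_class H)"
  proof (rule bdd_aboveI[where M=1])
    fix y assume "y \<in> F ` G_class H"
    then obtain g' where "y = F g'" by blast
    moreover have "\<bar>a - b\<bar> \<le> 1" if "0 \<le> a" "a \<le> 1" "0 \<le> b" "b \<le> 1" for a b :: real using that by auto
    ultimately show "y \<le> 1" unfolding F_def
      using prob_space.prob_le_1[OF D(1)] prob_space.prob_le_1[OF Dt(1)] by (simp add: measure_nonneg)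
  qed
  have "F g \<le> (SUP g\<in>G_class H. F g)" by (rule cSUP_upper[OF gG bdd])
  moreover have "pop_loss Dt h h' = 2 * measure Dt {x \<in> space Dt. g x = 1}"
    unfolding g_def by (rule loss_prob) (use Dt H h in auto)
  moreover have "pop_loss D h h' = 2 * measure D {x \<in> space D. g x = 1}"
    unfolding g_def by (rule loss_prob) (use D H h in auto)
  ultimately show ?thesis unfolding G_dist_def F_def by linarith
qed

lemma lambda_bound:
  assumes D: "prob_space D" "sets D = sets M" and Dt: "prob_space Dt" "sets Dt = sets M"
    and H: "\<forall>h\<in>H. (\<forall>x. h x \<in> simplex_vertices) \<and> vec_measurable M h"
    and hs: "\<forall>x. hstar x \<in> simplex_vertices" "vec_measurable M hstar"
    and h: "h \<in> H"
  shows "pop_loss Dt h hstar \<le> pop_loss D h hstar + min_comb_loss Dt D H hstar + G_dist (G_class H) D Dt"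
proof -
  have vs: "\<And>x. x \<in> simplex_vertices \<Longrightarrow> x \<in> prob_simplex" using vert_simplex by blast
  have "pop_loss Dt h hstar - pop_loss D h hstar - G_dist (G_class H) D Dt \<le> min_comb_loss Dt D H hstar"
    unfolding min_comb_loss_def
  proof (rule cINF_greatest)
    show "H \<noteq> {}" using h by blast
    fix h' assume h': "h' \<in> H"
    have "pop_loss Dt h hstar \<le> pop_loss Dt h h' + pop_loss Dt h' hstar"
      by (rule pop_tri[OF Dt]) (use H h h' hs vs in auto)
    moreover have "pop_loss D h h' \<le> pop_loss D h hstar + pop_loss D hstar h'"
      by (rule pop_tri[OF D]) (use H h h' hs vs in auto)
    moreover have "pop_loss Dt h h' \<le> pop_loss D h h' + G_dist (G_class H) D Dt"
      by (rule dom_shift[OF D Dt H h h'])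
    ultimately show "pop_loss Dt h hstar - pop_loss D h hstar - G_dist (G_class H) D Dt
       \<le> pop_loss Dt h' hstar + pop_loss D h' hstar"
      using pop_sym[of D hstar h'] by linarith
  qed
  thus ?thesis by linarith
qed

lemma cond_term_eq:
  assumes D: "prob_space D" "sets D = sets M" and A: "A \<in> sets D"
    and m: "vec_measurable M f" "vec_measurable M g"
    and s: "\<forall>x. f x \<in> prob_simplex" "\<forall>x. g x \<in> prob_simplex"
  shows "cond_term D A f g = (\<integral>x. l1dist (f x) (g x) * indicator A x \<partial>D)"
proof -
  interpret prob_space D by fact
  have fm: "finite_measure D" by unfold_locales
  have i: "integrable D (\<lambda>x. l1dist (f x) (g x))" by (rule l1_int[OF fm m D(2) s])
  have iA: "integrable D (\<lambda>x. l1dist (f x) (g x) * indicator A x)"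
    by (rule integrable_real_mult_indicator[OF A i])
  note meas[measurable] = l1_meas[OF m D(2)]
  have nn: "0 \<le> (\<integral>x. l1dist (f x) (g x) * indicator A x \<partial>D)"
    by (rule Bochner_Integration.integral_nonneg) (simp add: l1dist_nonneg)
  show ?thesis
  proof (cases "measure D A = 0")
    case True
    have "(\<integral>x. l1dist (f x) (g x) * indicator A x \<partial>D) \<le> (\<integral>x. 2 * indicator A x \<partial>D)"
    proof (rule Bochner_Integration.integral_mono[OF iA])
      have "integrable D (indicator A :: _ \<Rightarrow> real)"
        by (rule integrable_real_indicator[OF A]) (simp add: emeasure_eq_measure)
      thus "integrable D (\<lambda>x. 2 * indicator A x :: real)" by simp
    qed (use A simplex_l1_le s in \<open>auto simp: indicator_def\<close>)
    also have "\<dots> = 0" using True A by simp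
    finally show ?thesis using True nn unfolding cond_term_def by simp
  next
    case False
    have p: "measure D A > 0" using False measure_nonneg[of D A] by linarith
    have um: "sets (uniform_measure D A) = sets D" by simp
    have "pop_loss (uniform_measure D A) f g = enn2real (\<integral>\<^sup>+x. ennreal (l1dist (f x) (g x)) \<partial>uniform_measure D A)"
      unfolding pop_loss_def
      by (rule integral_eq_nn_integral) (auto simp: l1dist_nonneg measurable_cong_sets[OF um refl])
    also have "(\<integral>\<^sup>+x. ennreal (l1dist (f x) (g x)) \<partial>uniform_measure D A)
        = (\<integral>\<^sup>+x. ennreal (l1dist (f x) (g x)) * indicator A x \<partial>D) / emeasure D A"
      by (rule nn_integral_uniform_measure) (use A in auto)
    also have "(\<integral>\<^sup>+x. ennreal (l1dist (f x) (g x)) * indicator A x \<partial>D)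
        = (\<integral>\<^sup>+x. ennreal (l1dist (f x) (g x) * indicator A x) \<partial>D)"
      by (intro nn_integral_cong) (auto simp: indicator_def)
    also have "\<dots> = ennreal (\<integral>x. l1dist (f x) (g x) * indicator A x \<partial>D)"
      by (rule nn_integral_eq_integral[OF iA]) (auto simp: l1dist_nonneg indicator_def)
    also have "emeasure D A = ennreal (measure D A)" by (simp add: emeasure_eq_measure)
    also have "ennreal (\<integral>x. l1dist (f x) (g x) * indicator A x \<partial>D) / ennreal (measure D A)
       = ennreal ((\<integral>x. l1dist (f x) (g x) * indicator A x \<partial>D) / measure D A)"
      by (rule divide_ennreal[OF nn p])
    finally have "pop_loss (uniform_measure D A) f g = (\<integral>x. l1dist (f x) (g x) * indicator A x \<partial>D) / measure D A"
      using nn p by simp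
    thus ?thesis using False unfolding cond_term_def by simp
  qed
qed

lemma proxy_split:
  assumes D: "prob_space D" "sets D = sets M"
    and hs: "\<forall>x. hstar x \<in> simplex_vertices" "vec_measurable M hstar"
    and hp: "\<forall>x. hp x \<in> prob_simplex" "vec_measurable M hp"
    and hh: "\<forall>x. hp_hat x \<in> prob_simplex" "vec_measurable M hp_hat"
  shows "pop_loss D hp hstar = cond_term D {x \<in> space D. hstar x \<noteq> hp_hat x} hstar hp
            + cond_term D {x \<in> space D. hstar x = hp_hat x} hp_hat hp"
proof -
  interpret prob_space D by fact
  have fm: "finite_measure D" by unfold_locales
  have hs': "\<forall>x. hstar x \<in> prob_simplex" using hs(1) vert_simplex by blast
  note [measurable] = l1_meas[OF hs(2) hh(2) D(2)]
  define A where "A = {x \<in> space D. hstar x \<noteq> hp_hat x}"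
  define B where "B = {x \<in> space D. hstar x = hp_hat x}"
  have A: "A \<in> sets D"
  proof -
    have "A = {x \<in> space D. l1dist (hstar x) (hp_hat x) \<noteq> 0}" unfolding A_def by (simp add: l1_eq0)
    also have "\<dots> \<in> sets D" by measurable
    finally show ?thesis .
  qed
  have B: "B \<in> sets D"
  proof -
    have "B = {x \<in> space D. l1dist (hstar x) (hp_hat x) = 0}" unfolding B_def by (simp add: l1_eq0)
    also have "\<dots> \<in> sets D" by measurable
    finally show ?thesis .
  qed
  have i1: "integrable D (\<lambda>x. l1dist (hstar x) (hp x))" by (rule l1_int[OF fm hs(2) hp(2) D(2) hs' hp(1)])
  have i2: "integrable D (\<lambda>x. l1dist (hp_hat x) (hp x))" by (rule l1_int[OF fm hh(2) hp(2) D(2) hh(1) hp(1)])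
  have "pop_loss D hp hstar = (\<integral>x. l1dist (hstar x) (hp x) \<partial>D)"
    unfolding pop_loss_def by (simp add: l1dist_sym)
  also have "\<dots> = (\<integral>x. l1dist (hstar x) (hp x) * indicator A x + l1dist (hp_hat x) (hp x) * indicator B x \<partial>D)"
    by (intro Bochner_Integration.integral_cong) (auto simp: A_def B_def indicator_def)
  also have "\<dots> = (\<integral>x. l1dist (hstar x) (hp x) * indicator A x \<partial>D) + (\<integral>x. l1dist (hp_hat x) (hp x) * indicator B x \<partial>D)"
    by (rule Bochner_Integration.integral_add)
       (rule integrable_real_mult_indicator[OF A i1], rule integrable_real_mult_indicator[OF B i2])
  also have "\<dots> = cond_term D A hstar hp + cond_term D B hp_hat hp"
    using cond_term_eq[OF D A hs(2) hp(2) hs' hp(1)] cond_term_eq[OF D B hh(2) hp(2) hh(1) hp(1)] by simp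
  finally show ?thesis unfolding A_def B_def .
qed

lemma chernoff_pair:
  fixes u v :: "'a \<Rightarrow> real"
  assumes A: "prob_space A" and B: "prob_space B"
    and um[measurable]: "u \<in> borel_measurable A" and vm[measurable]: "v \<in> borel_measurable B"
    and l: "l > 0"
    and Hu: "(\<integral>\<^sup>+y. ennreal (exp (l * u y)) \<partial>A) \<le> ennreal cu"
    and Hv: "(\<integral>\<^sup>+y. ennreal (exp (l * v y)) \<partial>B) \<le> ennreal cv"
    and c: "0 \<le> cu" "0 \<le> cv"
  shows "emeasure (PiM {..<n} (\<lambda>_. A) \<Otimes>\<^sub>M PiM {..<m} (\<lambda>_. B))
     {z \<in> space (PiM {..<n} (\<lambda>_. A) \<Otimes>\<^sub>M PiM {..<m} (\<lambda>_. B)).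
        \<epsilon> \<le> (\<Sum>i<n. u (fst z i)) + (\<Sum>j<m. v (snd z j))}
     \<le> ennreal (exp (-l*\<epsilon>) * cu^n * cv^m)"
proof -
  define P1 where "P1 = PiM {..<n} (\<lambda>_. A)"
  define P2 where "P2 = PiM {..<m} (\<lambda>_. B)"
  define N where "N = P1 \<Otimes>\<^sub>M P2"
  interpret pA: product_sigma_finite "\<lambda>_. A"
    unfolding product_sigma_finite_def using A prob_space_imp_sigma_finite by blast
  interpret pB: product_sigma_finite "\<lambda>_. B"
    unfolding product_sigma_finite_def using B prob_space_imp_sigma_finite by blast
  interpret P2: prob_space P2 unfolding P2_def by (rule prob_space_PiM) (use B in auto)
  define Z where "Z = (\<lambda>z. (\<Sum>i<n. u (fst z i)) + (\<Sum>j<m. v (snd z j)))"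
  have Zm[measurable]: "Z \<in> borel_measurable N" unfolding Z_def N_def P1_def P2_def by measurable
  have "emeasure N {z \<in> space N. \<epsilon> \<le> Z z}
     \<le> ennreal (exp (-l*\<epsilon>)) * (\<integral>\<^sup>+z. ennreal (exp (l * Z z)) * indicator (space N) z \<partial>N)"
    by (rule Chernoff_ineq_nn_integral_ge[OF l]) measurable
  also have "(\<integral>\<^sup>+z. ennreal (exp (l * Z z)) * indicator (space N) z \<partial>N)
     = (\<integral>\<^sup>+z. (\<Prod>i<n. ennreal (exp (l * u (fst z i)))) * (\<Prod>j<m. ennreal (exp (l * v (snd z j)))) \<partial>N)"
    by (intro nn_integral_cong)
       (simp add: Z_def distrib_left exp_add sum_distrib_left exp_sum prod_ennreal ennreal_mult prod_nonneg)
  also have "\<dots> = (\<integral>\<^sup>+x. \<integral>\<^sup>+y. (\<Prod>i<n. ennreal (exp (l * u (x i)))) * (\<Prod>j<m. ennreal (exp (l * v (y j)))) \<partial>P2 \<partial>P1)"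
    unfolding N_def by (subst P2.nn_integral_fst[symmetric]) (auto simp: P1_def P2_def)
  also have "\<dots> = (\<integral>\<^sup>+x. (\<Prod>i<n. ennreal (exp (l * u (x i)))) \<partial>P1) * (\<integral>\<^sup>+y. (\<Prod>j<m. ennreal (exp (l * v (y j)))) \<partial>P2)"
    by (simp add: nn_integral_cmult nn_integral_multc P1_def P2_def)
  also have "\<dots> = (\<Prod>i<n. \<integral>\<^sup>+y. ennreal (exp (l * u y)) \<partial>A) * (\<Prod>j<m. \<integral>\<^sup>+y. ennreal (exp (l * v y)) \<partial>B)"
    unfolding P1_def P2_def
    by (subst pA.product_nn_integral_prod, simp, simp, subst pB.product_nn_integral_prod, simp, simp) (rule refl)
  also have "\<dots> \<le> (\<Prod>i<n. ennreal cu) * (\<Prod>j<m. ennreal cv)"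
    by (intro mult_mono prod_mono_ennreal Hu Hv) auto
  finally have "emeasure N {z \<in> space N. \<epsilon> \<le> Z z} \<le> ennreal (exp (-l*\<epsilon>)) * ((\<Prod>i<n. ennreal cu) * (\<Prod>j<m. ennreal cv))"
    by (simp add: mult_left_mono)
  also have "\<dots> = ennreal (exp (-l*\<epsilon>) * cu^n * cv^m)"
    using c by (simp add: ennreal_power ennreal_mult mult.assoc)
  finally show ?thesis unfolding N_def P1_def P2_def Z_def .
qed

lemma hoeff_factor:
  assumes D: "prob_space D" and f[measurable]: "f \<in> borel_measurable D"
    and fb: "\<forall>x\<in>space D. 0 \<le> f x \<and> f x \<le> 2" and c: "0 \<le> c" and l: "0 < l"
  shows "(\<integral>\<^sup>+y. ennreal (exp (l * (c * ((\<integral>x. f x \<partial>D) - f y)))) \<partial>D) \<le> ennreal (exp (l\<^sup>2 * (2*c)\<^sup>2 / 8))"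
proof -
  interpret prob_space D by fact
  interpret interval_bounded_random_variable D "\<lambda>y. - (c * f y)" "-(2*c)" 0
  proof unfold_locales
    show "AE x in D. - (c * f x) \<in> {- (2 * c)..0}"
      using fb c by (intro AE_I2) (auto simp: mult.commute[of 2 c] intro!: mult_left_mono)
  qed simp
  have "(\<integral>\<^sup>+y. ennreal (exp (l * (c * ((\<integral>x. f x \<partial>D) - f y)))) \<partial>D)
      = (\<integral>\<^sup>+y. ennreal (exp (l * (- (c * f y) - expectation (\<lambda>y. - (c * f y))))) \<partial>D)"
    by (intro nn_integral_cong) (simp add: algebra_simps)
  also have "\<dots> \<le> ennreal (exp (l\<^sup>2 * (0 - - (2 * c))\<^sup>2 / 8))"
    by (rule Hoeffdings_lemma_nn_integral[OF l])
  finally show ?thesis by simp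
qed

theorem theorem2:
  fixes M Dk Dp Dt :: "'a measure"
    and hstar hp hp_hat hk :: "'a \<Rightarrow> 'c::finite \<Rightarrow> real"
    and H :: "('a \<Rightarrow> 'c \<Rightarrow> real) set"
    and \<alpha> \<delta> :: real and mk mp :: nat
  assumes C2: "CARD('c) \<ge> 2"
    and spaceM: "space M = UNIV"
    and Dk: "prob_space Dk" "sets Dk = sets M"
    and Dp: "prob_space Dp" "sets Dp = sets M"
    and Dt: "prob_space Dt" "sets Dt = sets M"
    and hstar: "\<forall>x. hstar x \<in> simplex_vertices" "vec_measurable M hstar"
    and hp: "\<forall>x. hp x \<in> prob_simplex" "vec_measurable M hp"
    and hp_hat: "\<forall>x. \<exists>j. hp_hat x = onehot j \<and> (\<forall>i. hp x i \<le> hp x j)" "vec_measurable M hp_hat"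
    and H: "\<forall>h\<in>H. (\<forall>x. h x \<in> simplex_vertices) \<and> vec_measurable M h"
    and hk: "hk \<in> H"
    and \<alpha>: "0 \<le> \<alpha>" "\<alpha> \<le> 1"
    and \<delta>: "0 < \<delta>" "\<delta> < 1"
    and m: "mk > 0" "mp > 0"
  shows "measure (PiM {..<mk} (\<lambda>_. Dk) \<Otimes>\<^sub>M PiM {..<mp} (\<lambda>_. Dp))
     {(S, T) \<in> space (PiM {..<mk} (\<lambda>_. Dk) \<Otimes>\<^sub>M PiM {..<mp} (\<lambda>_. Dp)).
        pop_loss Dt hk hstar
        \<le> train_loss \<alpha> mk S mp T hk hstar hp
          + sqrt ((2 * \<alpha>\<^sup>2 / real mk + 2 * (1 - \<alpha>)\<^sup>2 / real mp) * ln (2 / \<delta>))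
          + \<alpha> * (min_comb_loss Dt Dk H hstar + G_dist (G_class H) Dk Dt)
          + (1 - \<alpha>) * (min_comb_loss Dt Dp H hstar + G_dist (G_class H) Dp Dt
               + cond_term Dp {x \<in> space Dp. hstar x \<noteq> hp_hat x} hstar hp
               + cond_term Dp {x \<in> space Dp. hstar x = hp_hat x} hp_hat hp)}
   \<ge> 1 - \<delta>"
proof -
  interpret Dk: prob_space Dk by fact
  interpret Dp: prob_space Dp by fact
  interpret Dt: prob_space Dt by fact
  have vs: "\<And>x. x \<in> simplex_vertices \<Longrightarrow> x \<in> prob_simplex" using vert_simplex by blast
  have hs': "\<forall>x. hstar x \<in> prob_simplex" using hstar(1) vs by blast
  have hh': "\<forall>x. hp_hat x \<in> prob_simplex"
    using hp_hat(1) vs unfolding simplex_vertices_def by blast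
  have hkv: "\<forall>x. hk x \<in> simplex_vertices" "vec_measurable M hk" using H hk by auto
  have hk': "\<forall>x. hk x \<in> prob_simplex" using hkv vs by blast
  define fk where "fk = (\<lambda>x. l1dist (hk x) (hstar x))"
  define fp where "fp = (\<lambda>x. l1dist (hk x) (hp x))"
  have fkm[measurable]: "fk \<in> borel_measurable Dk" unfolding fk_def by (rule l1_meas[OF hkv(2) hstar(2) Dk(2)])
  have fpm[measurable]: "fp \<in> borel_measurable Dp" unfolding fp_def by (rule l1_meas[OF hkv(2) hp(2) Dp(2)])
  have fkb: "\<forall>x. 0 \<le> fk x \<and> fk x \<le> 2" unfolding fk_def using simplex_l1_le hk' hs' l1dist_nonneg by blast
  have fpb: "\<forall>x. 0 \<le> fp x \<and> fp x \<le> 2" unfolding fp_def using simplex_l1_le hk' hp(1) l1dist_nonneg by blast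
  define Ek where "Ek = pop_loss Dk hk hstar"
  define Ep where "Ep = pop_loss Dp hk hp"
  define lk where "lk = min_comb_loss Dt Dk H hstar + G_dist (G_class H) Dk Dt"
  define lp where "lp = min_comb_loss Dt Dp H hstar + G_dist (G_class H) Dp Dt
               + cond_term Dp {x \<in> space Dp. hstar x \<noteq> hp_hat x} hstar hp
               + cond_term Dp {x \<in> space Dp. hstar x = hp_hat x} hp_hat hp"
  define X where "X = pop_loss Dt hk hstar"
  have b1: "X \<le> Ek + lk" unfolding X_def Ek_def lk_def
    using lambda_bound[OF Dk Dt H hstar hk] by simp
  have b2: "X \<le> pop_loss Dp hk hstar + (min_comb_loss Dt Dp H hstar + G_dist (G_class H) Dp Dt)"
    unfolding X_def using lambda_bound[OF Dp Dt H hstar hk] by simp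
  have b3: "pop_loss Dp hk hstar \<le> Ep + pop_loss Dp hp hstar" unfolding Ep_def
    by (rule pop_tri[OF Dp hkv(2) hp(2) hstar(2) hk' hp(1) hs'])
  have b4: "pop_loss Dp hp hstar = cond_term Dp {x \<in> space Dp. hstar x \<noteq> hp_hat x} hstar hp
            + cond_term Dp {x \<in> space Dp. hstar x = hp_hat x} hp_hat hp"
    by (rule proxy_split[OF Dp hstar hp hh' hp_hat(2)])
  have b5: "X \<le> Ep + lp" using b2 b3 b4 unfolding lp_def by linarith
  have key: "X \<le> (\<alpha> * Ek + (1 - \<alpha>) * Ep) + (\<alpha> * lk + (1 - \<alpha>) * lp)"
  proof -
    have "\<alpha> * X \<le> \<alpha> * (Ek + lk)" by (rule mult_left_mono[OF b1 \<alpha>(1)])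
    moreover have "(1 - \<alpha>) * X \<le> (1 - \<alpha>) * (Ep + lp)" by (rule mult_left_mono[OF b5]) (use \<alpha> in simp)
    ultimately show ?thesis by (simp add: algebra_simps)
  qed
  define c1 where "c1 = \<alpha> / real mk"
  define c2 where "c2 = (1 - \<alpha>) / real mp"
  have c1: "0 \<le> c1" "0 \<le> c2" unfolding c1_def c2_def using \<alpha> by auto
  define Dd where "Dd = 4 * \<alpha>\<^sup>2 / real mk + 4 * (1 - \<alpha>)\<^sup>2 / real mp"
  have Dd: "Dd > 0"
  proof (cases "\<alpha> = 0")
    case True thus ?thesis unfolding Dd_def using m by simp
  next
    case False thus ?thesis unfolding Dd_def using m
      by (intro add_pos_nonneg) (auto intro!: divide_pos_pos)
  qed
  define \<epsilon> where "\<epsilon> = sqrt ((2 * \<alpha>\<^sup>2 / real mk + 2 * (1 - \<alpha>)\<^sup>2 / real mp) * ln (2 / \<delta>))"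
  have lnpos: "ln (2 / \<delta>) > 0" using \<delta> by (simp add: field_simps)
  have rad: "(2 * \<alpha>\<^sup>2 / real mk + 2 * (1 - \<alpha>)\<^sup>2 / real mp) * ln (2 / \<delta>) = Dd / 2 * ln (2 / \<delta>)"
    unfolding Dd_def by (simp add: field_simps)
  have eps2: "\<epsilon>\<^sup>2 = Dd / 2 * ln (2 / \<delta>)" unfolding \<epsilon>_def rad using Dd lnpos by simp
  have epos: "\<epsilon> > 0" unfolding \<epsilon>_def rad using Dd lnpos by simp
  define l where "l = 4 * \<epsilon> / Dd"
  have l: "l > 0" unfolding l_def using epos Dd by simp
  define u where "u = (\<lambda>y. c1 * (Ek - fk y))"
  define v where "v = (\<lambda>y. c2 * (Ep - fp y))"
  have Ekf: "Ek = (\<integral>x. fk x \<partial>Dk)" unfolding Ek_def fk_def pop_loss_def ..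
  have Epf: "Ep = (\<integral>x. fp x \<partial>Dp)" unfolding Ep_def fp_def pop_loss_def ..
  have Hu: "(\<integral>\<^sup>+y. ennreal (exp (l * u y)) \<partial>Dk) \<le> ennreal (exp (l\<^sup>2 * (2*c1)\<^sup>2 / 8))"
    unfolding u_def Ekf by (rule hoeff_factor[OF Dk(1) fkm _ c1(1) l]) (use fkb in auto)
  have Hv: "(\<integral>\<^sup>+y. ennreal (exp (l * v y)) \<partial>Dp) \<le> ennreal (exp (l\<^sup>2 * (2*c2)\<^sup>2 / 8))"
    unfolding v_def Epf by (rule hoeff_factor[OF Dp(1) fpm _ c1(2) l]) (use fpb in auto)
  define N where "N = PiM {..<mk} (\<lambda>_. Dk) \<Otimes>\<^sub>M PiM {..<mp} (\<lambda>_. Dp)"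
  interpret N: prob_space N unfolding N_def
    by (intro prob_space_pair prob_space_PiM) (use Dk Dp in auto)
  define Z where "Z = (\<lambda>z. (\<Sum>i<mk. u (fst z i)) + (\<Sum>j<mp. v (snd z j)))"
  have um[measurable]: "u \<in> borel_measurable Dk" unfolding u_def by measurable
  have vm[measurable]: "v \<in> borel_measurable Dp" unfolding v_def by measurable
  have Zm[measurable]: "Z \<in> borel_measurable N" unfolding Z_def N_def by measurable
  define bad where "bad = {z \<in> space N. \<epsilon> \<le> Z z}"
  have badm: "bad \<in> sets N" unfolding bad_def by measurable
  have "emeasure N bad \<le> ennreal (exp (-l*\<epsilon>) * (exp (l\<^sup>2 * (2*c1)\<^sup>2 / 8))^mk * (exp (l\<^sup>2 * (2*c2)\<^sup>2 / 8))^mp)"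
    unfolding bad_def N_def Z_def by (rule chernoff_pair[OF Dk(1) Dp(1) um vm l Hu Hv]) auto
  also have "exp (-l*\<epsilon>) * (exp (l\<^sup>2 * (2*c1)\<^sup>2 / 8))^mk * (exp (l\<^sup>2 * (2*c2)\<^sup>2 / 8))^mp
      = exp (-l*\<epsilon> + real mk * (l\<^sup>2 * (2*c1)\<^sup>2 / 8) + real mp * (l\<^sup>2 * (2*c2)\<^sup>2 / 8))"
    by (simp only: exp_add exp_of_nat_mult)
  also have "-l*\<epsilon> + real mk * (l\<^sup>2 * (2*c1)\<^sup>2 / 8) + real mp * (l\<^sup>2 * (2*c2)\<^sup>2 / 8) = -l*\<epsilon> + l\<^sup>2 * Dd / 8"
    unfolding c1_def c2_def Dd_def using m by (simp add: field_simps power2_eq_square)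
  also have "-l*\<epsilon> + l\<^sup>2 * Dd / 8 = - 2 * \<epsilon>\<^sup>2 / Dd"
    unfolding l_def using Dd by (simp add: field_simps power2_eq_square)
  also have "- 2 * \<epsilon>\<^sup>2 / Dd = - ln (2 / \<delta>)" unfolding eps2 using Dd by simp
  also have "exp (- ln (2 / \<delta>)) = \<delta> / 2" using \<delta> by (simp add: exp_minus)
  finally have pbad: "measure N bad \<le> \<delta> / 2"
    using \<delta> by (simp add: N.emeasure_eq_measure)
  have Zeq: "Z z = (\<alpha> * Ek + (1 - \<alpha>) * Ep) - train_loss \<alpha> mk (fst z) mp (snd z) hk hstar hp" for z
  proof -
    have "(\<Sum>i<mk. u (fst z i)) = c1 * (real mk * Ek - (\<Sum>i<mk. fk (fst z i)))"
      unfolding u_def by (simp add: sum_distrib_left[symmetric] sum_subtractf)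
    also have "\<dots> = \<alpha> * Ek - \<alpha> * emp_loss mk (fst z) hk hstar"
      unfolding c1_def emp_loss_def fk_def using m by (simp add: field_simps)
    finally have 1: "(\<Sum>i<mk. u (fst z i)) = \<alpha> * Ek - \<alpha> * emp_loss mk (fst z) hk hstar" .
    have "(\<Sum>j<mp. v (snd z j)) = c2 * (real mp * Ep - (\<Sum>j<mp. fp (snd z j)))"
      unfolding v_def by (simp add: sum_distrib_left[symmetric] sum_subtractf)
    also have "\<dots> = (1 - \<alpha>) * Ep - (1 - \<alpha>) * emp_loss mp (snd z) hk hp"
      unfolding c2_def emp_loss_def fp_def using m by (simp add: field_simps)
    finally have 2: "(\<Sum>j<mp. v (snd z j)) = (1 - \<alpha>) * Ep - (1 - \<alpha>) * emp_loss mp (snd z) hk hp" .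
    show ?thesis unfolding Z_def train_loss_def using 1 2 by simp
  qed
  define G where "G = {(S, T) \<in> space N.
        pop_loss Dt hk hstar
        \<le> train_loss \<alpha> mk S mp T hk hstar hp
          + sqrt ((2 * \<alpha>\<^sup>2 / real mk + 2 * (1 - \<alpha>)\<^sup>2 / real mp) * ln (2 / \<delta>))
          + \<alpha> * (min_comb_loss Dt Dk H hstar + G_dist (G_class H) Dk Dt)
          + (1 - \<alpha>) * (min_comb_loss Dt Dp H hstar + G_dist (G_class H) Dp Dt
               + cond_term Dp {x \<in> space Dp. hstar x \<noteq> hp_hat x} hstar hp
               + cond_term Dp {x \<in> space Dp. hstar x = hp_hat x} hp_hat hp)}"
  have Geq: "G = {z \<in> space N. X \<le> (\<alpha> * Ek + (1 - \<alpha>) * Ep) - Z z + \<epsilon> + (\<alpha> * lk + (1 - \<alpha>) * lp)}"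
    unfolding G_def Zeq X_def lk_def lp_def \<epsilon>_def by (auto simp: algebra_simps)
  have Gm: "G \<in> sets N" unfolding Geq by measurable
  have sub: "space N - bad \<subseteq> G"
    unfolding Geq bad_def using key by auto
  have "1 - \<delta> \<le> 1 - measure N bad" using pbad \<delta> by simp
  also have "\<dots> = measure N (space N - bad)" using N.prob_compl[OF badm] by simp
  also have "\<dots> \<le> measure N G" by (rule N.finite_measure_mono[OF sub Gm])
  finally show ?thesis unfolding G_def N_def .
qed

end
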